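(* For each integer $d\ge 1$ let $\Delta^{d-1}=\{p\in\mathbb{R}^d_{\ge 0}:\sum_{f=1}^d p_f=1\}$ be the standard simplex, and let \[ \Psi^{(d)}:\mathbb{R}_{\ge 0}^d\setminus\{0\}\to \Delta^{d-1} \] be a map (a "local share rule"). Assume the family $\{\Psi^{(d)}\}_{d\ge 1}$ satisfies refinement consistency: for every $d\ge1$, every $a=(a_1,\dots,a_d)\in\mathbb{R}^d_{\ge0}\setminus\{0\}$, every index $k\in\{1,\dots,d\}$ and every $r,q\ge 0$ with $r+q=a_k$, the refined vector \[ a^{[k\to(r,q)]}=(a_1,\dots,a_{k-1},r,q,a_{k+1},\dots,a_d)\in\mathbb{R}^{d+1}_{\ge0} \] satisfies, when $a_k>0$, \[ \Psi^{(d+1)}\!\left(a^{[k\to(r,q)]}\right)=\left(\Psi_1^{(d)}(a),\dots,\Psi_{k-1}^{(d)}(a),\tfrac{r}{a_k}\Psi_k^{(d)}(a),\tfrac{q}{a_k}\Psi_k^{(d)}(a),\Psi_{k+1}^{(d)}(a),\dots,\Psi_d^{(d)}(a)\right), \] and, when $a_k=0$, $\Psi^{(d+1)}(a^{[k\to(0,0)]})$ agrees with $\Psi^{(d)}(a)$ on all non-refined coordinates (in the same order) and assigns the value $0$ to the two refined coordinates. Then for every $d\ge1$, every $a\in\mathbb{R}^d_{\ge0}\setminus\{0\}$ and every $f\in\{1,\dots,d\}$, \[ \Psi^{(d)}_f(a)=\frac{a_f}{\sum_{g=1}^d a_g}. \]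
   Context: The requirement that each $\Psi^{(d)}$ takes values in the simplex (nonnegative entries summing to one) is called "budgeting". Entries $a_f$ are interpreted as nonnegative local efforts of factors. *)

theory Defs
  imports Complex_Main
begin

text \<open>Vectors in R^d are represented as real lists of length d (0-indexed).
  A family of local share rules Psi^(d), d >= 1, is a single function on lists;
  Psi^(d) is its restriction to lists of length d.\<close>

definition nonneg_nonzero :: "real list \<Rightarrow> bool" where
  "nonneg_nonzero a \<longleftrightarrow> (\<forall>x\<in>set a. 0 \<le> x) \<and> (\<exists>x\<in>set a. x \<noteq> 0)"

definition in_simplex :: "nat \<Rightarrow> real list \<Rightarrow> bool" where
  "in_simplex d p \<longleftrightarrow> length p = d \<and> (\<forall>x\<in>set p. 0 \<le> x) \<and> sum_list p = 1"

definition refine :: "'a list \<Rightarrow> nat \<Rightarrow> 'a \<Rightarrow> 'a \<Rightarrow> 'a list" where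
  "refine a k r q = take k a @ [r, q] @ drop (Suc k) a"

end

theory Submission
  imports Defs
begin

lemma refine_map: "refine (map g b) k (g r) (g q) = map g (refine b k r q)"
  by (simp add: refine_def take_map drop_map)

lemma nn_of_sum: "(\<forall>x\<in>set b. 0 \<le> (x::real)) \<Longrightarrow> sum_list b \<noteq> 0 \<Longrightarrow> nonneg_nonzero b"
  unfolding nonneg_nonzero_def using sum_list_nonneg_eq_0_iff[of b] by auto

theorem theorem4p1:
  fixes Psi :: "real list \<Rightarrow> real list"
  assumes budget: "\<And>a. nonneg_nonzero a \<Longrightarrow> in_simplex (length a) (Psi a)"
    and refine_pos: "\<And>a k r q. nonneg_nonzero a \<Longrightarrow> k < length a \<Longrightarrow> 0 \<le> r \<Longrightarrow> 0 \<le> q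
        \<Longrightarrow> r + q = a ! k \<Longrightarrow> 0 < a ! k
        \<Longrightarrow> Psi (refine a k r q) = refine (Psi a) k (r / a ! k * Psi a ! k) (q / a ! k * Psi a ! k)"
    and refine_zero: "\<And>a k. nonneg_nonzero a \<Longrightarrow> k < length a \<Longrightarrow> a ! k = 0
        \<Longrightarrow> Psi (refine a k 0 0) = refine (Psi a) k 0 0"
    and a: "nonneg_nonzero a" and f: "f < length a"
  shows "Psi a ! f = a ! f / sum_list a"
proof -
  define S where "S = sum_list a"
  have anng: "\<forall>x\<in>set a. 0 \<le> x" using a by (simp add: nonneg_nonzero_def)
  have Spos: "S > 0"
  proof -
    have "S \<ge> 0" unfolding S_def using anng by (simp add: sum_list_nonneg)
    moreover have "S \<noteq> 0" unfolding S_def using a anng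
      by (auto simp: nonneg_nonzero_def sum_list_nonneg_eq_0_iff)
    ultimately show ?thesis by simp
  qed
  let ?g = "\<lambda>x. x / S"
  have step: "Psi (refine b k r q) = map ?g (refine b k r q)"
    if nb: "nonneg_nonzero b" and hb: "Psi b = map ?g b" and k: "k < length b"
      and r: "0 \<le> r" and q: "0 \<le> q" and rq: "r + q = b ! k" for b k r q
  proof (cases "b ! k = 0")
    case True
    hence "r = 0" "q = 0" using r q rq by auto
    thus ?thesis using refine_zero[OF nb k True] hb refine_map[of ?g b k 0 0] by simp
  next
    case False
    hence pos: "b ! k > 0" using rq r q by linarith
    have "Psi (refine b k r q) = refine (map ?g b) k (r / b ! k * (b!k / S)) (q / b ! k * (b!k / S))"
      using refine_pos[OF nb k r q rq pos] hb k by simp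
    also have "\<dots> = refine (map ?g b) k (?g r) (?g q)" using pos by simp
    also have "\<dots> = map ?g (refine b k r q)" by (rule refine_map)
    finally show ?thesis .
  qed
  define n where "n = length a"
  have n1: "n \<ge> 1" using f n_def by simp
  define B where "B j = take j a @ [sum_list (drop j a)]" for j
  have nnB: "\<forall>x\<in>set (B j). 0 \<le> x" for j
    using anng set_take_subset[of j a] set_drop_subset[of j a]
    by (auto simp: B_def intro!: sum_list_nonneg)
  have sumB: "sum_list (B j) = S" for j
    proof -
    have "sum_list a = sum_list (take j a) + sum_list (drop j a)"
      by (subst append_take_drop_id[symmetric, of a j], subst sum_list_append) (rule refl)
    thus ?thesis unfolding B_def S_def by simp
  qed
  have nzB: "nonneg_nonzero (B j)" for j
    using nn_of_sum[OF nnB] sumB Spos by simp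
  have main: "j < n \<Longrightarrow> Psi (B j) = map ?g (B j)" for j
  proof (induction j)
    case 0
    have "in_simplex 1 (Psi [S])" using budget[OF nzB[of 0]] by (simp add: B_def S_def)
    hence "Psi [S] = [1]" unfolding in_simplex_def
      by (cases "Psi [S]") auto
    then show ?case using Spos by (simp add: B_def S_def)
  next
    case (Suc j)
    have jn: "j < length a" using Suc n_def by simp
    have "B (Suc j) = refine (B j) j (a ! j) (sum_list (drop (Suc j) a))"
    proof -
      have "drop j a = a ! j # drop (Suc j) a" using jn by (simp add: Cons_nth_drop_Suc)
      thus ?thesis unfolding B_def refine_def using jn by (simp add: take_Suc_conv_app_nth)
    qed
    moreover have "Psi (refine (B j) j (a ! j) (sum_list (drop (Suc j) a))) =
        map ?g (refine (B j) j (a ! j) (sum_list (drop (Suc j) a)))"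
    proof (rule step[OF nzB])
      show "Psi (B j) = map ?g (B j)" using Suc by simp
      show "j < length (B j)" using jn by (simp add: B_def)
      show "0 \<le> a ! j" using anng jn by simp
      show "0 \<le> sum_list (drop (Suc j) a)" using anng set_drop_subset[of "Suc j" a]
        by (auto intro!: sum_list_nonneg)
      have "drop j a = a ! j # drop (Suc j) a" using jn by (simp add: Cons_nth_drop_Suc)
      thus "a ! j + sum_list (drop (Suc j) a) = B j ! j" using jn
        by (simp add: B_def nth_append)
    qed
    ultimately show ?case by simp
  qed
  have "B (n - 1) = a"
  proof -
    have nl: "n - 1 < length a" using n1 n_def by simp
    have d0: "drop (Suc (n - 1)) a = []" using n1 n_def by simp
    have "drop (n - 1) a = [a ! (n - 1)]" using Cons_nth_drop_Suc[OF nl] d0 by simp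
    hence "B (n - 1) = take (n - 1) a @ [a ! (n - 1)]" unfolding B_def by simp
    also have "\<dots> = take (Suc (n - 1)) a" using take_Suc_conv_app_nth[OF nl] by simp
    also have "\<dots> = a" using n1 n_def by simp
    finally show ?thesis .
  qed
  hence "Psi a = map ?g a" using main[of "n - 1"] n1 by simp
  thus ?thesis using f S_def by simp
qed

end
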